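(* Let $\mathcal{A}$ be a finite set, $d\ge1$, and let $\mathcal{M}=\{(\mu_i,D_i)\}_{i=1}^\infty$ be locally mixing with $D_i\uparrow\mathbb{Z}^d$ as $i\to\infty$ (each $\mu_i$ a probability measure on $\mathcal{A}^{D_i}$). Then $\mu_i$ converges as $i\to\infty$ (in the sense of convergence of the marginals on every finite set) to a probability measure $\mu$ on $\mathcal{A}^{\mathbb{Z}^d}$, and $\mu$ is locally mixing with the same rate function.
   Context: A rate function is a decreasing function $\rho:\mathbb{N}\to[0,\infty)$ with $\rho(k)\to0$ as $k\to\infty$. Let $\Lambda_n=[-n,n]^d\cap\mathbb{Z}^d$. Let $\mathcal{M}$ be a collection of pairs $(\mu,D)$ with $D\subset\mathbb{Z}^d$ (possibly infinite) and $\mu$ a probability measure on $\mathcal{A}^D$. $\mathcal{M}$ is locally mixing with rate function $\rho$ if for every $n\ge1$ and all $(\mu,D),(\mu',D')\in\mathcal{M}$ with $\Lambda_n\subset D\cap D'$ there exists a coupling of $f\sim\mu$ and $f'\sim\mu'$ such that (1) $f|_{D\setminus\Lambda_n}$ and $f'$ are independent, and (2) $\mathbb{P}(f(v)\neq f'(v))\le\rho(n-k)$ for every $0\le k\le n$ and every $v\in\Lambda_k$. $\mathcal{M}$ is locally mixing if it is locally mixing with some rate function. A single measure $\mu$ on $\mathcal{A}^{\mathbb{Z}^d}$ is locally mixing (with rate $\rho$) if $\{(\mu,\mathbb{Z}^d)\}$ is. *)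

theory Defs
  imports "HOL-Probability.Probability"
begin

text \<open>Sites of the lattice Z^d are vectors int ^ 'd with 'd a finite index type
  (d = CARD('d) >= 1). The alphabet is a finite type 'a.\<close>

definition box :: "nat \<Rightarrow> (int ^ 'd::finite) set" where
  "box n = {v. \<forall>i. \<bar>v $ i\<bar> \<le> int n}"

definition config_space :: "(int ^ 'd::finite) set \<Rightarrow> ((int ^ 'd) \<Rightarrow> 'a) measure" where
  "config_space D = PiM D (\<lambda>_. count_space UNIV)"

definition rate_function :: "(nat \<Rightarrow> real) \<Rightarrow> bool" where
  "rate_function \<rho> \<longleftrightarrow> antimono \<rho> \<and> (\<forall>k. 0 \<le> \<rho> k) \<and> \<rho> \<longlonglongrightarrow> 0"

definition is_coupling ::
  "((int ^ 'd::finite \<Rightarrow> 'a) \<times> (int ^ 'd \<Rightarrow> 'a)) measure \<Rightarrow>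
   (int ^ 'd \<Rightarrow> 'a) measure \<Rightarrow> (int ^ 'd) set \<Rightarrow>
   (int ^ 'd \<Rightarrow> 'a) measure \<Rightarrow> (int ^ 'd) set \<Rightarrow> bool" where
  "is_coupling \<nu> \<mu> D \<mu>' D' \<longleftrightarrow>
     prob_space \<nu> \<and> sets \<nu> = sets (config_space D \<Otimes>\<^sub>M config_space D') \<and>
     distr \<nu> (config_space D) fst = \<mu> \<and> distr \<nu> (config_space D') snd = \<mu>'"

definition locally_mixing_with ::
  "((int ^ 'd::finite \<Rightarrow> 'a) measure \<times> (int ^ 'd) set) set \<Rightarrow> (nat \<Rightarrow> real) \<Rightarrow> bool" where
  "locally_mixing_with M \<rho> \<longleftrightarrow> rate_function \<rho> \<and>
    (\<forall>n\<ge>1. \<forall>(\<mu>, D)\<in>M. \<forall>(\<mu>', D')\<in>M. box n \<subseteq> D \<inter> D' \<longrightarrow>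
       (\<exists>\<nu>. is_coupling \<nu> \<mu> D \<mu>' D' \<and>
          prob_space.indep_var \<nu>
             (config_space (D - box n)) (\<lambda>p. restrict (fst p) (D - box n))
             (config_space D') snd \<and>
          (\<forall>k\<le>n. \<forall>v\<in>box k.
             measure \<nu> {p \<in> space \<nu>. fst p v \<noteq> snd p v} \<le> \<rho> (n - k))))"

definition locally_mixing ::
  "((int ^ 'd::finite \<Rightarrow> 'a) measure \<times> (int ^ 'd) set) set \<Rightarrow> bool" where
  "locally_mixing M \<longleftrightarrow> (\<exists>\<rho>. locally_mixing_with M \<rho>)"

end

theory Submission imports Defs "HOL-Library.Diagonal_Subsequence"
begin

lemma cyl_eq:
  assumes "\<eta> \<in> PiE J (\<lambda>_. UNIV)"
  shows "(restrict g J = \<eta>) = (\<forall>v\<in>J. g v = \<eta> v)"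
  using assms by (auto simp: restrict_def PiE_def extensional_def fun_eq_iff)

lemma cyl_sets:
  fixes X :: "'m \<Rightarrow> 'i \<Rightarrow> 'b"
  assumes fin: "finite J" and X: "\<And>v. (\<lambda>x. X x v) \<in> measurable m (count_space UNIV)"
    and eta: "\<eta> \<in> PiE J (\<lambda>_. UNIV)"
  shows "{x \<in> space m. restrict (X x) J = \<eta>} \<in> sets m"
proof -
  have "{x \<in> space m. restrict (X x) J = \<eta>} = {x \<in> space m. \<forall>v\<in>J. X x v = \<eta> v}"
    using cyl_eq[OF eta] by auto
  also have "\<dots> \<in> sets m"
    using fin X by measurable
  finally show ?thesis .
qed

lemma ev_sum:
  fixes X :: "'m \<Rightarrow> 'i \<Rightarrow> 'b::finite"
  assumes fin: "finite J" and X: "\<And>v. (\<lambda>x. X x v) \<in> measurable m (count_space UNIV)"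
    and fm: "finite_measure m"
  shows "measure m {x \<in> space m. \<Phi> (restrict (X x) J)} =
     (\<Sum>\<eta> \<in> {\<eta> \<in> PiE J (\<lambda>_. UNIV). \<Phi> \<eta>}. measure m {x \<in> space m. restrict (X x) J = \<eta>})"
proof -
  let ?S = "{\<eta> \<in> PiE J (\<lambda>_. UNIV). \<Phi> \<eta>}"
  have finS: "finite ?S" using fin by (auto intro: finite_subset[OF _ finite_PiE[of J "\<lambda>_. UNIV"]])
  have "{x \<in> space m. \<Phi> (restrict (X x) J)} = (\<Union>\<eta>\<in>?S. {x \<in> space m. restrict (X x) J = \<eta>})"
    by auto
  moreover have "measure m (\<Union>\<eta>\<in>?S. {x \<in> space m. restrict (X x) J = \<eta>}) =
     (\<Sum>\<eta> \<in> ?S. measure m {x \<in> space m. restrict (X x) J = \<eta>})"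
    apply (rule measure_finite_Union[OF finS])
    using cyl_sets[OF fin X] apply auto[1]
    apply (auto simp: disjoint_family_on_def)[1]
    using finite_measure.emeasure_finite[OF fm] by auto
  ultimately show ?thesis by simp
qed

lemma ext_thm:
  fixes q :: "'i set \<Rightarrow> ('i \<Rightarrow> 'b::finite) \<Rightarrow> real"
  assumes nonneg: "\<And>J \<eta>. finite J \<Longrightarrow> \<eta> \<in> PiE J (\<lambda>_. UNIV) \<Longrightarrow> 0 \<le> q J \<eta>"
    and sum1: "\<And>J. finite J \<Longrightarrow> (\<Sum>\<eta>\<in>PiE J (\<lambda>_. UNIV). q J \<eta>) = 1"
    and cons: "\<And>J H \<eta>. finite H \<Longrightarrow> J \<subseteq> H \<Longrightarrow> \<eta> \<in> PiE J (\<lambda>_. UNIV) \<Longrightarrow>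
       q J \<eta> = (\<Sum>\<eta>'\<in>{\<eta>'\<in>PiE H (\<lambda>_. UNIV). restrict \<eta>' J = \<eta>}. q H \<eta>')"
  shows "\<exists>m. prob_space m \<and> sets m = sets (PiM UNIV (\<lambda>_. count_space (UNIV::'b set))) \<and>
     (\<forall>J \<eta>. finite J \<longrightarrow> \<eta> \<in> PiE J (\<lambda>_. UNIV) \<longrightarrow> measure m {f\<in>space m. restrict f J = \<eta>} = q J \<eta>)"
proof -
  define f where "f J \<eta> = (if \<eta> \<in> PiE J (\<lambda>_. UNIV::'b set) then q J \<eta> else 0)" for J and \<eta> :: "'i \<Rightarrow> 'b"
  have f_nonneg: "0 \<le> f J \<eta>" if "finite J" for J \<eta>
    using nonneg[OF that] by (auto simp: f_def)
  have f_int: "(\<integral>\<^sup>+\<eta>. ennreal (f J \<eta>) \<partial>count_space UNIV) = 1" if J: "finite J" for J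
  proof -
    have "(\<integral>\<^sup>+\<eta>. ennreal (f J \<eta>) \<partial>count_space UNIV) =
       (\<integral>\<^sup>+\<eta>. ennreal (f J \<eta>) * indicator (PiE J (\<lambda>_. UNIV)) \<eta> \<partial>count_space UNIV)"
      by (intro nn_integral_cong) (auto simp: f_def)
    also have "\<dots> = (\<integral>\<^sup>+\<eta>. ennreal (f J \<eta>) \<partial>count_space (PiE J (\<lambda>_. UNIV)))"
      by (simp add: nn_integral_count_space_indicator)
    also have "\<dots> = (\<Sum>\<eta>\<in>PiE J (\<lambda>_. UNIV). ennreal (f J \<eta>))"
      using J by (intro nn_integral_count_space_finite) (auto intro: finite_PiE)
    also have "\<dots> = ennreal (\<Sum>\<eta>\<in>PiE J (\<lambda>_. UNIV). f J \<eta>)"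
      using f_nonneg[OF J] by simp
    also have "(\<Sum>\<eta>\<in>PiE J (\<lambda>_. UNIV). f J \<eta>) = 1"
      using sum1[OF J] by (simp add: f_def)
    finally show ?thesis by simp
  qed
  define p where "p J = embed_pmf (f J)" for J
  have pmf_p: "pmf (p J) \<eta> = f J \<eta>" if "finite J" for J \<eta>
    unfolding p_def by (rule pmf_embed_pmf[OF f_nonneg[OF that] f_int[OF that]])
  have set_p: "set_pmf (p J) \<subseteq> PiE J (\<lambda>_. UNIV)" if "finite J" for J
    using pmf_p[OF that] by (auto simp: set_pmf_iff f_def split: if_splits)
  have map_p: "map_pmf (\<lambda>\<eta>. restrict \<eta> J) (p H) = p J" if H: "finite H" "J \<subseteq> H" for J H
  proof (rule pmf_eqI)
    fix \<eta> :: "'i \<Rightarrow> 'b"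
    have J: "finite J" using H finite_subset by auto
    let ?B = "{\<eta>'\<in>PiE H (\<lambda>_. UNIV). restrict \<eta>' J = \<eta>}"
    have finB: "finite ?B" using H by (auto intro: finite_subset[OF _ finite_PiE[of H "\<lambda>_. UNIV"]])
    have "pmf (map_pmf (\<lambda>\<eta>. restrict \<eta> J) (p H)) \<eta> = measure (p H) ((\<lambda>\<eta>. restrict \<eta> J) -` {\<eta>})"
      by (simp add: pmf_map)
    also have "\<dots> = measure (p H) ((\<lambda>\<eta>. restrict \<eta> J) -` {\<eta>} \<inter> set_pmf (p H))"
      by (simp add: measure_Int_set_pmf)
    also have "(\<lambda>\<eta>. restrict \<eta> J) -` {\<eta>} \<inter> set_pmf (p H) = ?B \<inter> set_pmf (p H)"
      using set_p[OF H(1)] by auto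
    also have "measure (p H) \<dots> = measure (p H) ?B"
      by (simp add: measure_Int_set_pmf)
    also have "\<dots> = (\<Sum>\<eta>'\<in>?B. q H \<eta>')"
      using finB by (simp add: measure_measure_pmf_finite pmf_p[OF H(1)] f_def)
    also have "\<dots> = pmf (p J) \<eta>"
    proof (cases "\<eta> \<in> PiE J (\<lambda>_. UNIV)")
      case True
      then show ?thesis using cons[OF H True] pmf_p[OF J] by (simp add: f_def)
    next
      case False
      then have "?B = {}" by auto
      then have "(\<Sum>\<eta>'\<in>?B. q H \<eta>') = 0" by (simp only: sum.empty)
      then show ?thesis using False pmf_p[OF J] by (simp add: f_def)
    qed
    finally show "pmf (map_pmf (\<lambda>\<eta>. restrict \<eta> J) (p H)) \<eta> = pmf (p J) \<eta>" .
  qed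
  define enc where "enc J \<eta> = restrict (\<lambda>i. discrete (\<eta> i)) J" for J and \<eta> :: "'i \<Rightarrow> 'b"
  define P where "P J = distr (measure_pmf (p J)) (PiM J (\<lambda>_. borel :: 'b discrete measure)) (enc J)" for J
  have enc_meas: "enc J \<in> measurable (measure_pmf (p H)) (PiM J (\<lambda>_. borel :: 'b discrete measure))" for J H
    by (auto simp: enc_def space_PiM)
  have enc_meas': "enc J \<in> measurable (count_space UNIV) (PiM J (\<lambda>_. borel :: 'b discrete measure))" for J
    by (auto simp: enc_def space_PiM)
  have proj: "projective_family UNIV P (\<lambda>_. borel)"
  proof (rule projective_family.intro)
    fix J H :: "'i set" assume JH: "J \<subseteq> H" "finite H" "H \<subseteq> UNIV"
    have "distr (P H) (PiM J (\<lambda>_. borel)) (\<lambda>f. restrict f J) =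
       distr (measure_pmf (p H)) (PiM J (\<lambda>_. borel)) ((\<lambda>f. restrict f J) \<circ> enc H)"
      unfolding P_def
      by (rule distr_distr[OF measurable_restrict_subset[OF JH(1)] enc_meas])
    also have "(\<lambda>f. restrict f J) \<circ> enc H = enc J \<circ> (\<lambda>\<eta>. restrict \<eta> J)"
      using JH(1) by (auto simp: enc_def fun_eq_iff restrict_def)
    also have "distr (measure_pmf (p H)) (PiM J (\<lambda>_. borel)) (enc J \<circ> (\<lambda>\<eta>. restrict \<eta> J)) =
       distr (distr (measure_pmf (p H)) (count_space UNIV) (\<lambda>\<eta>. restrict \<eta> J)) (PiM J (\<lambda>_. borel)) (enc J)"
      by (rule distr_distr[symmetric, OF enc_meas']) simp
    also have "\<dots> = P J"
      unfolding P_def map_p[OF JH(2,1), symmetric] map_pmf_rep_eq ..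
    finally show "P J = distr (P H) (PiM J (\<lambda>_. borel)) (\<lambda>f. restrict f J)" ..
  next
    fix J :: "'i set"
    show "prob_space (P J)" unfolding P_def
      by (intro prob_space.prob_space_distr prob_space_measure_pmf enc_meas)
  qed
  interpret PP: polish_projective UNIV P
    unfolding polish_projective_def by (rule proj)
  define dec where "dec \<omega> = (\<lambda>i. of_discrete (\<omega> i :: 'b discrete))" for \<omega> :: "'i \<Rightarrow> 'b discrete"
  have od_meas: "of_discrete \<in> measurable (borel :: 'b discrete measure) (count_space UNIV)"
    by (subst measurable_cong_sets[OF sets_borel_eq_count_space refl]) auto
  have dec_meas: "dec \<in> measurable PP.lim (PiM UNIV (\<lambda>_. count_space (UNIV::'b set)))"
    unfolding dec_def
  proof (rule measurable_PiM_single')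
    fix i :: 'i
    have "(\<lambda>\<omega>. \<omega> i) \<in> measurable PP.lim (borel :: 'b discrete measure)"
      by (subst measurable_cong_sets[OF PP.sets_lim refl]) (rule measurable_component_singleton, simp)
    then show "(\<lambda>\<omega>. of_discrete (\<omega> i)) \<in> measurable PP.lim (count_space UNIV)"
      by (rule measurable_compose[OF _ od_meas])
  qed auto
  define m where "m = distr PP.lim (PiM UNIV (\<lambda>_. count_space (UNIV::'b set))) dec"
  have "prob_space m"
    unfolding m_def by (rule prob_space.prob_space_distr[OF PP.P.prob_space_axioms dec_meas])
  moreover have "sets m = sets (PiM UNIV (\<lambda>_. count_space (UNIV::'b set)))"
    by (simp add: m_def)
  moreover have "measure m {f\<in>space m. restrict f J = \<eta>} = q J \<eta>"
    if J: "finite J" and eta: "\<eta> \<in> PiE J (\<lambda>_. UNIV)" for J \<eta>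
  proof -
    have encJ: "enc J \<eta> \<in> PiE J (\<lambda>_. UNIV)" by (simp add: enc_def)
    have sing: "{enc J \<eta>} \<in> sets (PiM J (\<lambda>_. borel :: 'b discrete measure))"
    proof -
      have "{enc J \<eta>} = PiE J (\<lambda>i. {enc J \<eta> i})"
        by (rule PiE_singleton[symmetric]) (simp add: enc_def)
      also have "\<dots> \<in> sets (PiM J (\<lambda>_. borel :: 'b discrete measure))"
        using J by (intro sets_PiM_I_finite) (auto simp: sets_borel_eq_count_space)
      finally show ?thesis .
    qed
    have "measure m {f\<in>space m. restrict f J = \<eta>} = measure PP.lim (dec -` {f\<in>space m. restrict f J = \<eta>} \<inter> space PP.lim)"
      unfolding m_def
      by (rule measure_distr[OF dec_meas]) (use cyl_sets[where m=m and X="\<lambda>x. x", OF J _ eta] in \<open>auto simp: m_def\<close>)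
    also have "dec -` {f\<in>space m. restrict f J = \<eta>} \<inter> space PP.lim = PP.emb UNIV J {enc J \<eta>}"
      using cyl_eq[OF eta] cyl_eq[OF encJ]
      by (auto simp: m_def dec_def prod_emb_def space_PiM enc_def discrete_inverse) (metis of_discrete_inverse)
    also have "measure PP.lim \<dots> = measure (P J) {enc J \<eta>}"
      by (rule PP.measure_lim_emb[OF _ J sing]) simp
    also have "\<dots> = measure (p J) (enc J -` {enc J \<eta>} \<inter> space (measure_pmf (p J)))"
      unfolding P_def by (rule measure_distr[OF enc_meas sing])
    also have "\<dots> = measure (p J) ((enc J -` {enc J \<eta>}) \<inter> set_pmf (p J))"
      by (simp add: measure_Int_set_pmf)
    also have "(enc J -` {enc J \<eta>}) \<inter> set_pmf (p J) = {\<eta>} \<inter> set_pmf (p J)"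
      using set_p[OF J] eta cyl_eq[OF eta] cyl_eq[OF encJ]
      by (auto simp: enc_def restrict_def fun_eq_iff discrete_inject PiE_def extensional_def)
         (metis (mono_tags, lifting) mem_Collect_eq subsetD)
    also have "measure (p J) \<dots> = pmf (p J) \<eta>"
      by (simp add: measure_Int_set_pmf measure_pmf_single)
    also have "\<dots> = q J \<eta>" using pmf_p[OF J] eta by (simp add: f_def)
    finally show ?thesis .
  qed
  ultimately show ?thesis by blast
qed



lemma coord_meas: "(\<lambda>f. f v) \<in> measurable (PiM D (\<lambda>_. count_space UNIV)) (count_space UNIV)"
proof (cases "v \<in> D")
  case True then show ?thesis by (rule measurable_component_singleton)
next
  case False
  show ?thesis
    by (rule measurable_cong[where f="\<lambda>_. undefined", THEN iffD1])
       (use False in \<open>auto simp: space_PiM PiE_def extensional_def\<close>)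
qed

lemma diag_conv:
  fixes F :: "nat \<Rightarrow> nat \<Rightarrow> real"
  assumes B: "\<And>i n. \<bar>F i n\<bar> \<le> B"
  shows "\<exists>s. strict_mono s \<and> (\<forall>n. convergent (\<lambda>k. F (s k) n))"
proof -
  interpret S: subseqs "\<lambda>n s. convergent (\<lambda>k. F (s k) n)"
  proof
    fix n and s :: "nat \<Rightarrow> nat" assume "strict_mono s"
    have "bounded (range (\<lambda>k. F (s k) n))"
      unfolding bounded_real using B by auto
    then obtain l r where r: "strict_mono r" "((\<lambda>k. F (s k) n) \<circ> r) \<longlonglongrightarrow> l"
      using bounded_imp_convergent_subsequence by blast
    then show "\<exists>r'. strict_mono r' \<and> convergent (\<lambda>k. F ((s \<circ> r') k) n)"
      by (auto simp: convergent_def o_def)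
  qed
  have "convergent (\<lambda>k. F (S.diagseq k) n)" for n
  proof -
    have "convergent (\<lambda>k. F ((S.diagseq \<circ> (+) (Suc n)) k) n)"
      by (rule S.diagseq_holds) (auto dest: convergent_subseq_convergent simp: o_def)
    then have "convergent (\<lambda>k. F (S.diagseq (k + Suc n)) n)"
      by (simp add: o_def add.commute)
    then show ?thesis by (rule convergent_ignore_initial_segment[THEN iffD1])
  qed
  then show ?thesis using S.subseq_diagseq by blast
qed

lemma diag_conv_countable:
  fixes G :: "nat \<Rightarrow> 't \<Rightarrow> real"
  assumes T: "countable T" and B: "\<And>i t. \<bar>G i t\<bar> \<le> B"
  shows "\<exists>s. strict_mono s \<and> (\<forall>t\<in>T. convergent (\<lambda>k. G (s k) t))"
proof -
  obtain s where s: "strict_mono s" "\<And>n. convergent (\<lambda>k. G (s k) (from_nat_into T n))"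
    using diag_conv[of "\<lambda>i n. G i (from_nat_into T n)" B] B by blast
  have "convergent (\<lambda>k. G (s k) t)" if "t \<in> T" for t
    using s(2)[of "to_nat_on T t"] from_nat_into_to_nat_on[OF T that] by simp
  then show ?thesis using s(1) by blast
qed

lemma glim:
  fixes X :: "nat \<Rightarrow> 'm \<Rightarrow> 'i \<Rightarrow> 'b::finite"
  assumes ps: "\<And>i. prob_space (m i)"
    and Xm: "\<And>i v. (\<lambda>x. X i x v) \<in> measurable (m i) (count_space UNIV)"
    and conv: "\<And>J \<eta>. finite J \<Longrightarrow> \<eta> \<in> PiE J (\<lambda>_. UNIV) \<Longrightarrow>
        convergent (\<lambda>i. measure (m i) {x\<in>space (m i). restrict (X i x) J = \<eta>})"
  shows "\<exists>mm. prob_space mm \<and> sets mm = sets (PiM UNIV (\<lambda>_. count_space (UNIV::'b set))) \<and>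
     (\<forall>J \<Phi>. finite J \<longrightarrow> (\<lambda>i. measure (m i) {x\<in>space (m i). \<Phi> (restrict (X i x) J)})
        \<longlonglongrightarrow> measure mm {f\<in>space mm. \<Phi> (restrict f J)})"
proof -
  define a where "a i J \<eta> = measure (m i) {x\<in>space (m i). restrict (X i x) J = \<eta>}" for i J \<eta>
  define q where "q J \<eta> = lim (\<lambda>i. a i J \<eta>)" for J \<eta>
  have aq: "(\<lambda>i. a i J \<eta>) \<longlonglongrightarrow> q J \<eta>" if "finite J" "\<eta> \<in> PiE J (\<lambda>_. UNIV)" for J \<eta>
    using conv[OF that] unfolding q_def a_def by (simp add: convergent_LIMSEQ_iff)
  have fm: "finite_measure (m i)" for i
    using ps[of i] by (simp add: prob_space_def)
  have evs: "measure (m i) {x\<in>space (m i). \<Phi> (restrict (X i x) J)} =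
      (\<Sum>\<eta> \<in> {\<eta> \<in> PiE J (\<lambda>_. UNIV). \<Phi> \<eta>}. a i J \<eta>)" if "finite J" for i J \<Phi>
    unfolding a_def by (rule ev_sum[OF that Xm fm])
  have finS: "finite {\<eta> \<in> PiE J (\<lambda>_. UNIV::'b set). \<Phi> \<eta>}" if "finite J" for J \<Phi>
    using that by (auto intro: finite_subset[OF _ finite_PiE[of J "\<lambda>_. UNIV"]])
  have sum_lim: "(\<lambda>i. measure (m i) {x\<in>space (m i). \<Phi> (restrict (X i x) J)}) \<longlonglongrightarrow>
      (\<Sum>\<eta> \<in> {\<eta> \<in> PiE J (\<lambda>_. UNIV). \<Phi> \<eta>}. q J \<eta>)" if J: "finite J" for J \<Phi>
    unfolding evs[OF J] by (rule tendsto_sum) (use aq J in auto)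
  have nonneg: "0 \<le> q J \<eta>" if "finite J" "\<eta> \<in> PiE J (\<lambda>_. UNIV)" for J \<eta>
    by (rule LIMSEQ_le_const[OF aq[OF that]]) (auto simp: a_def)
  have sum1: "(\<Sum>\<eta>\<in>PiE J (\<lambda>_. UNIV). q J \<eta>) = 1" if J: "finite J" for J
  proof -
    have "(\<lambda>i. measure (m i) {x\<in>space (m i). (\<lambda>_. True) (restrict (X i x) J)}) \<longlonglongrightarrow> 1"
      using prob_space.prob_space[OF ps] by simp
    from LIMSEQ_unique[OF sum_lim[OF J] this] show ?thesis by simp
  qed
  have cons: "q J \<eta> = (\<Sum>\<eta>'\<in>{\<eta>'\<in>PiE H (\<lambda>_. UNIV). restrict \<eta>' J = \<eta>}. q H \<eta>')"
    if H: "finite H" "J \<subseteq> H" and eta: "\<eta> \<in> PiE J (\<lambda>_. UNIV)" for J H \<eta>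
  proof -
    have J: "finite J" using finite_subset[OF H(2) H(1)] .
    have HJ: "H \<inter> J = J" using H(2) by blast
    have "(\<lambda>i. a i J \<eta>) = (\<lambda>i. measure (m i) {x\<in>space (m i). (\<lambda>\<xi>. restrict \<xi> J = \<eta>) (restrict (X i x) H)})"
      unfolding a_def restrict_restrict HJ ..
    then have "(\<lambda>i. a i J \<eta>) \<longlonglongrightarrow> (\<Sum>\<eta>'\<in>{\<eta>'\<in>PiE H (\<lambda>_. UNIV). restrict \<eta>' J = \<eta>}. q H \<eta>')"
      using sum_lim[OF H(1), of "\<lambda>\<xi>. restrict \<xi> J = \<eta>"] by simp
    then show ?thesis using LIMSEQ_unique[OF aq[OF J eta]] by blast
  qed
  obtain mm where mm: "prob_space mm" "sets mm = sets (PiM UNIV (\<lambda>_. count_space (UNIV::'b set)))"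
    "\<And>J \<eta>. finite J \<Longrightarrow> \<eta> \<in> PiE J (\<lambda>_. UNIV) \<Longrightarrow> measure mm {f\<in>space mm. restrict f J = \<eta>} = q J \<eta>"
    using ext_thm[of q, OF nonneg sum1 cons] by blast
  have mmX: "(\<lambda>f. f v) \<in> measurable mm (count_space UNIV)" for v
    using coord_meas by (subst measurable_cong_sets[OF mm(2) refl])
  have "(\<lambda>i. measure (m i) {x\<in>space (m i). \<Phi> (restrict (X i x) J)})
        \<longlonglongrightarrow> measure mm {f\<in>space mm. \<Phi> (restrict f J)}" if J: "finite J" for J \<Phi>
  proof -
    have "measure mm {f\<in>space mm. \<Phi> (restrict f J)} =
       (\<Sum>\<eta> \<in> {\<eta> \<in> PiE J (\<lambda>_. UNIV). \<Phi> \<eta>}. measure mm {f\<in>space mm. restrict f J = \<eta>})"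
      by (rule ev_sum[OF J mmX]) (use mm(1) in \<open>simp add: prob_space_def\<close>)
    also have "\<dots> = (\<Sum>\<eta> \<in> {\<eta> \<in> PiE J (\<lambda>_. UNIV). \<Phi> \<eta>}. q J \<eta>)"
      using mm(3)[OF J] by simp
    finally show ?thesis using sum_lim[OF J] by simp
  qed
  then show ?thesis using mm(1,2) by blast
qed


lemma coupling_diff:
  fixes X Y :: "'m \<Rightarrow> 'i \<Rightarrow> 'b::countable"
  assumes ps: "prob_space N" and J: "finite J"
    and Xm: "\<And>v. (\<lambda>x. X x v) \<in> measurable N (count_space UNIV)"
    and Ym: "\<And>v. (\<lambda>x. Y x v) \<in> measurable N (count_space UNIV)"
  shows "\<bar>measure N {x\<in>space N. restrict (X x) J = \<eta>} - measure N {x\<in>space N. restrict (Y x) J = \<eta>}\<bar>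
     \<le> (\<Sum>v\<in>J. measure N {x\<in>space N. X x v \<noteq> Y x v})"
proof -
  interpret prob_space N by fact
  define C where "C v = {x\<in>space N. X x v \<noteq> Y x v}" for v
  have Cs: "C v \<in> events" for v
  proof -
    have "(\<lambda>x. (X x v, Y x v)) \<in> measurable N (count_space (UNIV::'b set) \<Otimes>\<^sub>M count_space (UNIV::'b set))"
      using Xm Ym by (rule measurable_Pair)
    then have m: "(\<lambda>x. (X x v, Y x v)) \<in> measurable N (count_space UNIV)"
      by (simp add: pair_measure_countable)
    have "C v = (\<lambda>x. (X x v, Y x v)) -` {p. fst p \<noteq> snd p} \<inter> space N"
      unfolding C_def by auto
    then show ?thesis using measurable_sets[OF m, of "{p. fst p \<noteq> snd p}"] by simp
  qed
  have UC: "(\<Union>v\<in>J. C v) \<in> events" using Cs J by auto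
  have sumC: "prob (\<Union>v\<in>J. C v) \<le> (\<Sum>v\<in>J. prob (C v))"
    using J Cs by (intro finite_measure_subadditive_finite) auto
  show ?thesis
  proof (cases "\<eta> \<in> PiE J (\<lambda>_. UNIV)")
    case False
    then have e: "{x\<in>space N. restrict (X x) J = \<eta>} = {}" "{x\<in>space N. restrict (Y x) J = \<eta>} = {}"
      by auto
    show ?thesis unfolding e by (simp add: sum_nonneg)
  next
    case True
    define A where "A = {x\<in>space N. restrict (X x) J = \<eta>}"
    define B where "B = {x\<in>space N. restrict (Y x) J = \<eta>}"
    have As: "A \<in> events" unfolding A_def by (rule cyl_sets[OF J Xm True])
    have Bs: "B \<in> events" unfolding B_def by (rule cyl_sets[OF J Ym True])
    have AB: "A \<subseteq> B \<union> (\<Union>v\<in>J. C v)" and BA: "B \<subseteq> A \<union> (\<Union>v\<in>J. C v)"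
      unfolding A_def B_def C_def using cyl_eq[OF True] by auto
    have "prob A \<le> prob (B \<union> (\<Union>v\<in>J. C v))"
      using AB Bs UC by (intro finite_measure_mono) auto
    also have "\<dots> \<le> prob B + prob (\<Union>v\<in>J. C v)"
      using Bs UC by (rule measure_Un_le)
    finally have 1: "prob A \<le> prob B + prob (\<Union>v\<in>J. C v)" .
    have "prob B \<le> prob (A \<union> (\<Union>v\<in>J. C v))"
      using BA As UC by (intro finite_measure_mono) auto
    also have "\<dots> \<le> prob A + prob (\<Union>v\<in>J. C v)"
      using As UC by (rule measure_Un_le)
    finally have 2: "prob B \<le> prob A + prob (\<Union>v\<in>J. C v)" .
    from 1 2 sumC show ?thesis unfolding A_def[symmetric] B_def[symmetric] C_def by linarith
  qed
qed

lemma cpl_basic: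
  fixes \<nu> :: "((int ^ 'd::finite \<Rightarrow> 'a::countable) \<times> (int ^ 'd \<Rightarrow> 'a)) measure"
  assumes c: "is_coupling \<nu> \<mu> D \<mu>' D'"
  shows cpl_prob: "prob_space \<nu>"
    and cpl_fst: "fst \<in> measurable \<nu> (config_space D)"
    and cpl_snd: "snd \<in> measurable \<nu> (config_space D')"
    and cpl_fstv: "(\<lambda>p. fst p v) \<in> measurable \<nu> (count_space UNIV)"
    and cpl_sndv: "(\<lambda>p. snd p v) \<in> measurable \<nu> (count_space UNIV)"
    and cpl_Z: "(\<lambda>p. (fst p v, snd p v)) \<in> measurable \<nu> (count_space UNIV)"
proof -
  have s: "sets \<nu> = sets (config_space D \<Otimes>\<^sub>M config_space D')" using c by (simp add: is_coupling_def)
  show "prob_space \<nu>" using c by (simp add: is_coupling_def)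
  show f: "fst \<in> measurable \<nu> (config_space D)"
    by (subst measurable_cong_sets[OF s refl]) (rule measurable_fst)
  show g: "snd \<in> measurable \<nu> (config_space D')"
    by (subst measurable_cong_sets[OF s refl]) (rule measurable_snd)
  show f': "(\<lambda>p. fst p v) \<in> measurable \<nu> (count_space UNIV)"
    using measurable_compose[OF f coord_meas[of v D, folded config_space_def]] by (simp add: config_space_def o_def)
  show g': "(\<lambda>p. snd p v) \<in> measurable \<nu> (count_space UNIV)"
    using measurable_compose[OF g coord_meas[of v D', folded config_space_def]] by (simp add: config_space_def o_def)
  have "(\<lambda>p. (fst p v, snd p v)) \<in> measurable \<nu> (count_space (UNIV::'a set) \<Otimes>\<^sub>M count_space (UNIV::'a set))"
    using f' g' by (rule measurable_Pair)
  then show "(\<lambda>p. (fst p v, snd p v)) \<in> measurable \<nu> (count_space UNIV)"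
    by (simp add: pair_measure_countable)
qed

lemma cpl_fst_event:
  fixes \<nu> :: "((int ^ 'd::finite \<Rightarrow> 'a::countable) \<times> (int ^ 'd \<Rightarrow> 'a)) measure"
  assumes c: "is_coupling \<nu> \<mu> D \<mu>' D'" and A: "A \<in> sets (config_space D)"
  shows "measure \<mu> A = measure \<nu> {p\<in>space \<nu>. fst p \<in> A}"
proof -
  have "measure \<mu> A = measure (distr \<nu> (config_space D) fst) A" using c by (simp add: is_coupling_def)
  also have "\<dots> = measure \<nu> (fst -` A \<inter> space \<nu>)" by (rule measure_distr[OF cpl_fst[OF c] A])
  finally show ?thesis by (simp add: Int_def conj_commute)
qed

lemma cpl_snd_event:
  fixes \<nu> :: "((int ^ 'd::finite \<Rightarrow> 'a::countable) \<times> (int ^ 'd \<Rightarrow> 'a)) measure"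
  assumes c: "is_coupling \<nu> \<mu> D \<mu>' D'" and A: "A \<in> sets (config_space D')"
  shows "measure \<mu>' A = measure \<nu> {p\<in>space \<nu>. snd p \<in> A}"
proof -
  have "measure \<mu>' A = measure (distr \<nu> (config_space D') snd) A" using c by (simp add: is_coupling_def)
  also have "\<dots> = measure \<nu> (snd -` A \<inter> space \<nu>)" by (rule measure_distr[OF cpl_snd[OF c] A])
  finally show ?thesis by (simp add: Int_def conj_commute)
qed


lemma cpl_cyl:
  fixes \<nu> :: "((int ^ 'd::finite \<Rightarrow> 'a::countable) \<times> (int ^ 'd \<Rightarrow> 'a)) measure"
  assumes c: "is_coupling \<nu> \<mu> D \<mu>' D'" and J: "finite J" and eta: "\<eta> \<in> PiE J (\<lambda>_. UNIV)"
  shows cpl_cyl_fst: "measure \<mu> {f\<in>space \<mu>. restrict f J = \<eta>} = measure \<nu> {p\<in>space \<nu>. restrict (fst p) J = \<eta>}"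
    and cpl_cyl_snd: "measure \<mu>' {f\<in>space \<mu>'. restrict f J = \<eta>} = measure \<nu> {p\<in>space \<nu>. restrict (snd p) J = \<eta>}"
proof -
  have sm: "space \<mu> = space (config_space D)" "space \<mu>' = space (config_space D')"
    using c by (auto simp: is_coupling_def)
  have A: "{f\<in>space (config_space D). restrict f J = \<eta>} \<in> sets (config_space D)"
    by (rule cyl_sets[where X="\<lambda>x. x", OF J _ eta]) (simp add: config_space_def coord_meas)
  have A': "{f\<in>space (config_space D'). restrict f J = \<eta>} \<in> sets (config_space D')"
    by (rule cyl_sets[where X="\<lambda>x. x", OF J _ eta]) (simp add: config_space_def coord_meas)
  show "measure \<mu> {f\<in>space \<mu>. restrict f J = \<eta>} = measure \<nu> {p\<in>space \<nu>. restrict (fst p) J = \<eta>}"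
    unfolding sm cpl_fst_event[OF c A] using measurable_space[OF cpl_fst[OF c]]
    by (intro arg_cong[where f="measure \<nu>"]) auto
  show "measure \<mu>' {f\<in>space \<mu>'. restrict f J = \<eta>} = measure \<nu> {p\<in>space \<nu>. restrict (snd p) J = \<eta>}"
    unfolding sm cpl_snd_event[OF c A'] using measurable_space[OF cpl_snd[OF c]]
    by (intro arg_cong[where f="measure \<nu>"]) auto
qed

lemma finite_box: "finite (box n :: (int ^ 'd::finite) set)"
proof -
  have "box n \<subseteq> (\<lambda>g. vec_lambda g) ` (PiE UNIV (\<lambda>_::'d. {-int n..int n}))"
  proof
    fix v :: "int ^ 'd" assume "v \<in> box n"
    then have "(\<lambda>i. v $ i) \<in> PiE UNIV (\<lambda>_::'d. {-int n..int n})" by (auto simp: box_def abs_le_iff) (metis minus_le_iff)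
    moreover have "v = vec_lambda (\<lambda>i. v $ i)" by simp
    ultimately show "v \<in> (\<lambda>g. vec_lambda g) ` (PiE UNIV (\<lambda>_::'d. {-int n..int n}))" by blast
  qed
  moreover have "finite (PiE UNIV (\<lambda>_::'d. {-int n..int n}))" by (rule finite_PiE) auto
  ultimately show ?thesis by (meson finite_imageI finite_subset)
qed

lemma box_mono: "k \<le> n \<Longrightarrow> box k \<subseteq> box n"
  by (auto simp: box_def) (meson int_ops(1) of_nat_le_iff order_trans)

lemma fin_in_box:
  fixes J :: "(int ^ 'd::finite) set"
  assumes "finite J" shows "\<exists>k. J \<subseteq> box k"
  using assms
proof (induction J rule: finite_induct)
  case empty then show ?case by auto
next
  case (insert v J)
  then obtain k where k: "J \<subseteq> box k" by blast
  define m where "m = Max (range (\<lambda>i. nat \<bar>v $ i\<bar>))"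
  have "nat \<bar>v $ i\<bar> \<le> m" for i unfolding m_def by (rule Max_ge) auto
  then have "v \<in> box m" by (auto simp: box_def) (metis int_nat_eq abs_ge_zero of_nat_le_iff order_trans nat_le_eq_zle le_refl)
  then have "insert v J \<subseteq> box (max k m)"
    using k box_mono[of k "max k m"] box_mono[of m "max k m"] by auto
  then show ?case by blast
qed

locale LM =
  fixes \<mu> :: "nat \<Rightarrow> ((int ^ 'd::finite) \<Rightarrow> 'a::finite) measure"
    and D :: "nat \<Rightarrow> (int ^ 'd) set"
    and \<rho> :: "nat \<Rightarrow> real"
  assumes prob: "\<And>i. prob_space (\<mu> i)"
    and sets_mu: "\<And>i. sets (\<mu> i) = sets (config_space (D i))"
    and mix: "locally_mixing_with (range (\<lambda>i. (\<mu> i, D i))) \<rho>"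
    and incD: "incseq D"
    and exhaust: "(\<Union>i. D i) = UNIV"
begin

lemma rate: "rate_function \<rho>" using mix by (simp add: locally_mixing_with_def)

lemma rho_nonneg: "0 \<le> \<rho> k" using rate by (simp add: rate_function_def)

lemma rho_lim: "\<rho> \<longlonglongrightarrow> 0" using rate by (simp add: rate_function_def)

lemma mixD:
  assumes n: "n \<ge> 1" and i: "box n \<subseteq> D i" and j: "box n \<subseteq> D j"
  shows "\<exists>\<nu>. is_coupling \<nu> (\<mu> i) (D i) (\<mu> j) (D j) \<and>
          prob_space.indep_var \<nu>
             (config_space (D i - box n)) (\<lambda>p. restrict (fst p) (D i - box n))
             (config_space (D j)) snd \<and>
          (\<forall>k\<le>n. \<forall>v\<in>box k.
             measure \<nu> {p \<in> space \<nu>. fst p v \<noteq> snd p v} \<le> \<rho> (n - k))"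
proof -
  have H: "\<forall>n\<ge>1. \<forall>(\<mu>', D')\<in>range (\<lambda>i. (\<mu> i, D i)). \<forall>(\<mu>'', D'')\<in>range (\<lambda>i. (\<mu> i, D i)). box n \<subseteq> D' \<inter> D'' \<longrightarrow>
       (\<exists>\<nu>. is_coupling \<nu> \<mu>' D' \<mu>'' D'' \<and>
          prob_space.indep_var \<nu>
             (config_space (D' - box n)) (\<lambda>p. restrict (fst p) (D' - box n))
             (config_space D'') snd \<and>
          (\<forall>k\<le>n. \<forall>v\<in>box k.
             measure \<nu> {p \<in> space \<nu>. fst p v \<noteq> snd p v} \<le> \<rho> (n - k)))"
    using mix unfolding locally_mixing_with_def by blast
  have "(\<mu> i, D i) \<in> range (\<lambda>i. (\<mu> i, D i))" "(\<mu> j, D j) \<in> range (\<lambda>i. (\<mu> i, D i))" by auto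
  with H n i j show ?thesis by fastforce
qed

lemma eventually_sub:
  assumes "finite J" shows "\<exists>i0. \<forall>i\<ge>i0. J \<subseteq> D i"
  using assms
proof (induction J rule: finite_induct)
  case empty then show ?case by auto
next
  case (insert v J)
  then obtain i0 where i0: "\<forall>i\<ge>i0. J \<subseteq> D i" by blast
  obtain i1 where i1: "v \<in> D i1" using exhaust by blast
  have "\<forall>i\<ge>max i0 i1. insert v J \<subseteq> D i"
    using i0 i1 incD by (auto simp: incseq_def) (meson max.cobounded2 order_trans subsetD)
  then show ?case by blast
qed

lemma mu_coord: "(\<lambda>f. f v) \<in> measurable (\<mu> i) (count_space UNIV)"
  by (subst measurable_cong_sets[OF sets_mu refl]) (simp add: config_space_def coord_meas)

end



lemma ev_sets:
  fixes X :: "'m \<Rightarrow> 'i \<Rightarrow> 'b::finite"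
  assumes fin: "finite J" and X: "\<And>v. (\<lambda>x. X x v) \<in> measurable m (count_space UNIV)"
  shows "{x \<in> space m. \<Phi> (restrict (X x) J)} \<in> sets m"
proof -
  let ?S = "{\<eta> \<in> PiE J (\<lambda>_. UNIV). \<Phi> \<eta>}"
  have finS: "finite ?S" using fin by (auto intro: finite_subset[OF _ finite_PiE[of J "\<lambda>_. UNIV"]])
  have "{x \<in> space m. \<Phi> (restrict (X x) J)} = (\<Union>\<eta>\<in>?S. {x \<in> space m. restrict (X x) J = \<eta>})"
    by auto
  also have "\<dots> \<in> sets m"
    using finS cyl_sets[OF fin X] by (intro sets.finite_UN) auto
  finally show ?thesis .
qed

lemma uniq_cyl:
  fixes m1 m2 :: "('i \<Rightarrow> 'b::finite) measure"
  assumes p1: "prob_space m1" and p2: "prob_space m2"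
    and s1: "sets m1 = sets (PiM UNIV (\<lambda>_. count_space UNIV))"
    and s2: "sets m2 = sets (PiM UNIV (\<lambda>_. count_space UNIV))"
    and eq: "\<And>J \<eta>. finite J \<Longrightarrow> \<eta> \<in> PiE J (\<lambda>_. UNIV) \<Longrightarrow>
       measure m1 {f\<in>space m1. restrict f J = \<eta>} = measure m2 {f\<in>space m2. restrict f J = \<eta>}"
  shows "m1 = m2"
proof (rule measure_eqI_PiM_infinite[where I=UNIV and M="\<lambda>_. count_space UNIV"])
  show "sets m1 = sets (PiM UNIV (\<lambda>_. count_space UNIV))" by (rule s1)
  show "sets m2 = sets (PiM UNIV (\<lambda>_. count_space UNIV))" by (rule s2)
  show "finite_measure m1" using p1 by (simp add: prob_space_def)
  fix A :: "'i \<Rightarrow> 'b set" and J :: "'i set" assume J: "finite J"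
  have sp1: "space m1 = UNIV" using sets_eq_imp_space_eq[OF s1] by (simp add: space_PiM)
  have sp2: "space m2 = UNIV" using sets_eq_imp_space_eq[OF s2] by (simp add: space_PiM)
  have c1: "(\<lambda>f. f v) \<in> measurable m1 (count_space UNIV)" for v
    by (subst measurable_cong_sets[OF s1 refl]) (rule coord_meas)
  have c2: "(\<lambda>f. f v) \<in> measurable m2 (count_space UNIV)" for v
    by (subst measurable_cong_sets[OF s2 refl]) (rule coord_meas)
  have pe: "prod_emb UNIV (\<lambda>_. count_space UNIV) J (PiE J A) = {f. restrict f J \<in> PiE J A}"
    by (auto simp: prod_emb_def)
  have "measure m1 {f\<in>space m1. restrict f J \<in> PiE J A} =
        measure m2 {f\<in>space m2. restrict f J \<in> PiE J A}"
    using ev_sum[where X="\<lambda>x. x" and \<Phi>="\<lambda>\<xi>. \<xi> \<in> PiE J A", OF J c1 prob_space.finite_measure[OF p1]]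
      ev_sum[where X="\<lambda>x. x" and \<Phi>="\<lambda>\<xi>. \<xi> \<in> PiE J A", OF J c2 prob_space.finite_measure[OF p2]]
      eq[OF J] by simp
  then have "measure m1 {f. restrict f J \<in> PiE J A} = measure m2 {f. restrict f J \<in> PiE J A}"
    by (simp add: sp1 sp2)
  then show "emeasure m1 (prod_emb UNIV (\<lambda>_. count_space UNIV) J (PiE J A)) =
             emeasure m2 (prod_emb UNIV (\<lambda>_. count_space UNIV) J (PiE J A))"
    unfolding pe by (simp add: finite_measure.emeasure_eq_measure[OF prob_space.finite_measure[OF p1]] finite_measure.emeasure_eq_measure[OF prob_space.finite_measure[OF p2]])
qed

lemma pair_Z_meas:
  fixes N :: "((int ^ 'd::finite \<Rightarrow> 'a::countable) \<times> (int ^ 'd \<Rightarrow> 'a)) measure"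
  assumes s: "sets N = sets (config_space D \<Otimes>\<^sub>M config_space D')"
  shows "(\<lambda>p. (fst p v, snd p v)) \<in> measurable N (count_space UNIV)"
proof -
  have f: "fst \<in> measurable N (config_space D)"
    by (subst measurable_cong_sets[OF s refl]) (rule measurable_fst)
  have g: "snd \<in> measurable N (config_space D')"
    by (subst measurable_cong_sets[OF s refl]) (rule measurable_snd)
  have f': "(\<lambda>p. fst p v) \<in> measurable N (count_space UNIV)"
    using measurable_compose[OF f coord_meas[of v D, folded config_space_def]] by (simp add: o_def)
  have g': "(\<lambda>p. snd p v) \<in> measurable N (count_space UNIV)"
    using measurable_compose[OF g coord_meas[of v D', folded config_space_def]] by (simp add: o_def)
  have "(\<lambda>p. (fst p v, snd p v)) \<in> measurable N (count_space (UNIV::'a set) \<Otimes>\<^sub>M count_space (UNIV::'a set))"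
    using f' g' by (rule measurable_Pair)
  then show ?thesis by (simp add: pair_measure_countable)
qed

lemma prod_emb_cnt:
  "f \<in> prod_emb I (\<lambda>_. count_space UNIV) J (PiE J F) \<longleftrightarrow> f \<in> extensional I \<and> (\<forall>v\<in>J. f v \<in> F v)"
  by (simp add: prod_emb_iff restrict_PiE_iff Pi_iff)

lemma Int_stable_vimage:
  assumes G: "Int_stable G"
  shows "Int_stable {f -` A \<inter> \<Omega> | A. A \<in> G}"
  unfolding Int_stable_def
proof (intro ballI)
  fix a b assume "a \<in> {f -` A \<inter> \<Omega> | A. A \<in> G}" "b \<in> {f -` A \<inter> \<Omega> | A. A \<in> G}"
  then obtain A B where AB: "a = f -` A \<inter> \<Omega>" "A \<in> G" "b = f -` B \<inter> \<Omega>" "B \<in> G" by blast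
  then have "a \<inter> b = f -` (A \<inter> B) \<inter> \<Omega>" by auto
  moreover have "A \<inter> B \<in> G" using G AB unfolding Int_stable_def by blast
  ultimately show "a \<inter> b \<in> {f -` A \<inter> \<Omega> | A. A \<in> G}" by blast
qed

context LM begin

lemma conv_mu:
  assumes J: "finite J" and eta: "\<eta> \<in> PiE J (\<lambda>_. UNIV)"
  shows "convergent (\<lambda>i. measure (\<mu> i) {f\<in>space (\<mu> i). restrict f J = \<eta>})"
proof -
  define a where "a i = measure (\<mu> i) {f\<in>space (\<mu> i). restrict f J = \<eta>}" for i
  have "Cauchy a"
  proof (rule CauchyI)
    fix e :: real assume e: "0 < e"
    obtain k where k: "J \<subseteq> box k" using fin_in_box[OF J] by blast
    define e' where "e' = e / (real (card J) + 1)"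
    have e': "0 < e'" using e by (simp add: e'_def)
    obtain N where N: "\<And>n. n \<ge> N \<Longrightarrow> \<rho> n < e'"
      using order_tendstoD(2)[OF rho_lim e'] by (auto simp: eventually_sequentially)
    define n where "n = k + N + 1"
    have n1: "n \<ge> 1" and kn: "k \<le> n" and rn: "\<rho> (n - k) < e'" using N[of "N+1"] by (auto simp: n_def)
    obtain i0 where i0: "\<And>i. i \<ge> i0 \<Longrightarrow> box n \<subseteq> D i" using eventually_sub[OF finite_box[of n]] by blast
    have "norm (a i - a j) < e" if i: "i \<ge> i0" and j: "j \<ge> i0" for i j
    proof -
      obtain \<nu> where c: "is_coupling \<nu> (\<mu> i) (D i) (\<mu> j) (D j)"
        and bd: "\<forall>k\<le>n. \<forall>v\<in>box k. measure \<nu> {p \<in> space \<nu>. fst p v \<noteq> snd p v} \<le> \<rho> (n - k)"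
        using mixD[OF n1 i0[OF i] i0[OF j]] by blast
      have "\<bar>a i - a j\<bar> = \<bar>measure \<nu> {p\<in>space \<nu>. restrict (fst p) J = \<eta>} - measure \<nu> {p\<in>space \<nu>. restrict (snd p) J = \<eta>}\<bar>"
        unfolding a_def cpl_cyl_fst[OF c J eta] cpl_cyl_snd[OF c J eta] ..
      also have "\<dots> \<le> (\<Sum>v\<in>J. measure \<nu> {p\<in>space \<nu>. fst p v \<noteq> snd p v})"
        by (rule coupling_diff[OF cpl_prob[OF c] J cpl_fstv[OF c] cpl_sndv[OF c]])
      also have "\<dots> \<le> (\<Sum>v\<in>J. \<rho> (n - k))"
        using bd kn k by (intro sum_mono) auto
      also have "\<dots> = real (card J) * \<rho> (n - k)" by simp
      also have "\<dots> \<le> real (card J) * e'" using rn by (intro mult_left_mono) auto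
      also have "\<dots> < e" using e by (simp add: e'_def field_simps)
      finally show ?thesis by simp
    qed
    then show "\<exists>M. \<forall>m\<ge>M. \<forall>n\<ge>M. norm (a m - a n) < e" by blast
  qed
  then show ?thesis unfolding a_def[symmetric] by (rule Cauchy_convergent)
qed

lemma mulim_ex:
  "\<exists>mm. prob_space mm \<and> sets mm = sets (PiM UNIV (\<lambda>_. count_space (UNIV::'a set))) \<and>
     (\<forall>J \<Phi>. finite J \<longrightarrow> (\<lambda>i. measure (\<mu> i) {x\<in>space (\<mu> i). \<Phi> (restrict x J)})
        \<longlonglongrightarrow> measure mm {f\<in>space mm. \<Phi> (restrict f J)})"
  using glim[of \<mu> "\<lambda>i x. x", OF prob mu_coord conv_mu] by simp


lemma limit_coupling:
  fixes mm :: "((int ^ 'd) \<Rightarrow> 'a) measure"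
  assumes mm: "prob_space mm" "sets mm = sets (PiM UNIV (\<lambda>_. count_space (UNIV::'a set)))"
    and mmlim: "\<And>J \<Phi>. finite J \<Longrightarrow> (\<lambda>i. measure (\<mu> i) {x\<in>space (\<mu> i). \<Phi> (restrict x J)})
        \<longlonglongrightarrow> measure mm {f\<in>space mm. \<Phi> (restrict f J)}"
    and n: "n \<ge> 1"
  shows "\<exists>\<nu>. is_coupling \<nu> mm UNIV mm UNIV \<and>
          prob_space.indep_var \<nu>
             (config_space (UNIV - box n)) (\<lambda>p. restrict (fst p) (UNIV - box n))
             (config_space UNIV) snd \<and>
          (\<forall>k\<le>n. \<forall>v\<in>box k.
             measure \<nu> {p \<in> space \<nu>. fst p v \<noteq> snd p v} \<le> \<rho> (n - k))"
proof -
  obtain i0 where i0: "\<And>i. i \<ge> i0 \<Longrightarrow> box n \<subseteq> D i" using eventually_sub[OF finite_box[of n]] by blast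
  define cp where "cp i \<nu> \<longleftrightarrow> is_coupling \<nu> (\<mu> (i+i0)) (D (i+i0)) (\<mu> (i+i0)) (D (i+i0)) \<and>
          prob_space.indep_var \<nu>
             (config_space (D (i+i0) - box n)) (\<lambda>p. restrict (fst p) (D (i+i0) - box n))
             (config_space (D (i+i0))) snd \<and>
          (\<forall>k\<le>n. \<forall>v\<in>box k.
             measure \<nu> {p \<in> space \<nu>. fst p v \<noteq> snd p v} \<le> \<rho> (n - k))" for i \<nu>
  define \<nu>s where "\<nu>s i = (SOME \<nu>. cp i \<nu>)" for i
  have cp\<nu>: "cp i (\<nu>s i)" for i
  proof -
    have "\<exists>\<nu>. cp i \<nu>" unfolding cp_def by (rule mixD[OF n i0 i0]) auto
    then show ?thesis unfolding \<nu>s_def by (rule someI_ex)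
  qed
  have cpl: "is_coupling (\<nu>s i) (\<mu> (i+i0)) (D (i+i0)) (\<mu> (i+i0)) (D (i+i0))" for i
    using cp\<nu>[of i] by (simp add: cp_def)
  define Z where "Z p = (\<lambda>v. (fst p v, snd p v))" for p :: "(int^'d \<Rightarrow> 'a) \<times> (int^'d \<Rightarrow> 'a)"
  have Zm: "(\<lambda>p. Z p v) \<in> measurable (\<nu>s i) (count_space UNIV)" for i v
    unfolding Z_def by (rule cpl_Z[OF cpl])
  define T where "T = (\<Union>J\<in>Collect (finite :: (int^'d) set \<Rightarrow> bool). {J} \<times> PiE J (\<lambda>_. UNIV :: ('a\<times>'a) set))"
  have Tc: "countable T"
    unfolding T_def
  proof (rule countable_UN)
    show "countable (Collect finite :: (int^'d) set set)" by (rule countable_Collect_finite)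
    fix J :: "(int^'d) set" assume "J \<in> Collect finite"
    then show "countable ({J} \<times> PiE J (\<lambda>_. UNIV :: ('a\<times>'a) set))"
      by (intro countable_finite finite_cartesian_product finite_PiE) auto
  qed
  define G where "G i t = measure (\<nu>s i) {p\<in>space (\<nu>s i). restrict (Z p) (fst t) = snd t}" for i t
  have Gb: "\<bar>G i t\<bar> \<le> 1" for i t
    unfolding G_def using prob_space.prob_le_1[OF cpl_prob[OF cpl]] by simp
  obtain s where s: "strict_mono s" "\<And>t. t \<in> T \<Longrightarrow> convergent (\<lambda>k. G (s k) t)"
    using diag_conv_countable[where G=G and B=1, OF Tc Gb] by blast
  have convs: "convergent (\<lambda>k. measure (\<nu>s (s k)) {p\<in>space (\<nu>s (s k)). restrict (Z p) J = \<eta>})"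
    if "finite J" "\<eta> \<in> PiE J (\<lambda>_. UNIV)" for J \<eta>
    using s(2)[of "(J, \<eta>)"] that by (simp add: T_def G_def)
  obtain mm2 :: "(int^'d \<Rightarrow> 'a\<times>'a) measure" where mm2: "prob_space mm2"
    "sets mm2 = sets (PiM UNIV (\<lambda>_. count_space (UNIV::('a\<times>'a) set)))"
    "\<And>J \<Phi>. finite J \<Longrightarrow> (\<lambda>k. measure (\<nu>s (s k)) {p\<in>space (\<nu>s (s k)). \<Phi> (restrict (Z p) J)})
        \<longlonglongrightarrow> measure mm2 {f\<in>space mm2. \<Phi> (restrict f J)}"
    using glim[of "\<lambda>k. \<nu>s (s k)" "\<lambda>k. Z", OF cpl_prob[OF cpl] Zm convs] by blast
  define split where "split \<omega> = ((\<lambda>v. fst (\<omega> v)), (\<lambda>v. snd (\<omega> v)))" for \<omega> :: "int^'d \<Rightarrow> 'a\<times>'a"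
  have split_meas: "split \<in> measurable mm2 (config_space UNIV \<Otimes>\<^sub>M config_space UNIV)"
  proof -
    have c: "(\<lambda>\<omega>. \<omega> v) \<in> measurable mm2 (count_space UNIV)" for v
      by (subst measurable_cong_sets[OF mm2(2) refl]) (rule coord_meas)
    have "(\<lambda>\<omega> v. fst (\<omega> v)) \<in> measurable mm2 (config_space UNIV)"
      unfolding config_space_def
      by (rule measurable_PiM_single') (auto intro: measurable_compose[OF c])
    moreover have "(\<lambda>\<omega> v. snd (\<omega> v)) \<in> measurable mm2 (config_space UNIV)"
      unfolding config_space_def
      by (rule measurable_PiM_single') (auto intro: measurable_compose[OF c])
    ultimately show ?thesis unfolding split_def by (rule measurable_Pair)
  qed
  define \<nu> where "\<nu> = distr mm2 (config_space UNIV \<Otimes>\<^sub>M config_space UNIV) split"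
  have \<nu>p: "prob_space \<nu>" unfolding \<nu>_def by (rule prob_space.prob_space_distr[OF mm2(1) split_meas])
  have \<nu>sets: "sets \<nu> = sets (config_space UNIV \<Otimes>\<^sub>M config_space UNIV)" by (simp add: \<nu>_def)
  have \<nu>Z: "(\<lambda>p. Z p v) \<in> measurable \<nu> (count_space UNIV)" for v
    unfolding Z_def by (rule pair_Z_meas[OF \<nu>sets])
  have \<nu>space: "space \<nu> = UNIV"
    by (simp add: \<nu>_def config_space_def space_pair_measure space_PiM)
  have \<nu>_ev: "measure \<nu> {p\<in>space \<nu>. \<Phi> (restrict (Z p) J)} = measure mm2 {f\<in>space mm2. \<Phi> (restrict f J)}"
    if J: "finite J" for J \<Phi>
  proof -
    have "measure \<nu> {p\<in>space \<nu>. \<Phi> (restrict (Z p) J)} =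
        measure mm2 (split -` {p\<in>space \<nu>. \<Phi> (restrict (Z p) J)} \<inter> space mm2)"
      unfolding \<nu>_def
      by (rule measure_distr[OF split_meas]) (use ev_sets[OF J \<nu>Z] in \<open>simp add: \<nu>_def\<close>)
    also have "split -` {p\<in>space \<nu>. \<Phi> (restrict (Z p) J)} \<inter> space mm2 = {f\<in>space mm2. \<Phi> (restrict f J)}"
      by (auto simp: \<nu>space split_def Z_def)
    finally show ?thesis .
  qed
  have \<nu>_conv: "(\<lambda>k. measure (\<nu>s (s k)) {p\<in>space (\<nu>s (s k)). \<Phi> (restrict (Z p) J)})
        \<longlonglongrightarrow> measure \<nu> {p\<in>space \<nu>. \<Phi> (restrict (Z p) J)}" if J: "finite J" for J \<Phi>
    unfolding \<nu>_ev[OF J] by (rule mm2(3)[OF J])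
  have fstZ: "restrict (\<lambda>v. fst (restrict (Z p) J v)) J = restrict (fst p) J" for p J
    by (auto simp: restrict_def fun_eq_iff Z_def)
  have sndZ: "restrict (\<lambda>v. snd (restrict (Z p) J v)) J = restrict (snd p) J" for p J
    by (auto simp: restrict_def fun_eq_iff Z_def)
  have sub_mono: "strict_mono (\<lambda>k. s k + i0)" using s(1) by (simp add: strict_mono_def)
  have mu_sub: "(\<lambda>k. measure (\<mu> (s k + i0)) {x\<in>space (\<mu> (s k + i0)). restrict x J = \<eta>})
        \<longlonglongrightarrow> measure mm {f\<in>space mm. restrict f J = \<eta>}" if J: "finite J" for J \<eta>
    using LIMSEQ_subseq_LIMSEQ[OF mmlim[OF J, of "\<lambda>\<xi>. \<xi> = \<eta>"] sub_mono] by (simp add: o_def)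
  have marg_fst: "distr \<nu> (config_space UNIV) fst = mm"
  proof (rule uniq_cyl)
    show "prob_space (distr \<nu> (config_space UNIV) fst)"
      by (rule prob_space.prob_space_distr[OF \<nu>p]) (simp add: \<nu>sets measurable_cong_sets[OF \<nu>sets refl])
    show "prob_space mm" by (rule mm(1))
    show "sets (distr \<nu> (config_space UNIV) fst) = sets (PiM UNIV (\<lambda>_. count_space UNIV))"
      by (simp add: config_space_def)
    show "sets mm = sets (PiM UNIV (\<lambda>_. count_space UNIV))" by (rule mm(2))
    fix J and \<eta> :: "int^'d \<Rightarrow> 'a" assume J: "finite J" and eta: "\<eta> \<in> PiE J (\<lambda>_. UNIV)"
    have fm: "fst \<in> measurable \<nu> (config_space UNIV)"
      by (subst measurable_cong_sets[OF \<nu>sets refl]) (rule measurable_fst)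
    have cs: "{f\<in>space (config_space UNIV). restrict f J = \<eta>} \<in> sets (config_space UNIV)"
      by (rule cyl_sets[where X="\<lambda>x. x", OF J _ eta]) (simp add: config_space_def coord_meas)
    have "measure (distr \<nu> (config_space UNIV) fst) {f\<in>space (distr \<nu> (config_space UNIV) fst). restrict f J = \<eta>}
        = measure \<nu> (fst -` {f\<in>space (config_space UNIV). restrict f J = \<eta>} \<inter> space \<nu>)"
      by (simp add: measure_distr[OF fm cs])
    also have "\<dots> = measure \<nu> {p\<in>space \<nu>. (\<lambda>\<xi>. restrict (\<lambda>v. fst (\<xi> v)) J = \<eta>) (restrict (Z p) J)}"
      unfolding fstZ by (auto simp: \<nu>space config_space_def space_PiM intro!: arg_cong[where f="measure \<nu>"])
    finally have 1: "measure (distr \<nu> (config_space UNIV) fst) {f\<in>space (distr \<nu> (config_space UNIV) fst). restrict f J = \<eta>}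
        = measure \<nu> {p\<in>space \<nu>. (\<lambda>\<xi>. restrict (\<lambda>v. fst (\<xi> v)) J = \<eta>) (restrict (Z p) J)}" .
    have eqseq: "(\<lambda>k. measure (\<nu>s (s k)) {p\<in>space (\<nu>s (s k)). (\<lambda>\<xi>. restrict (\<lambda>v. fst (\<xi> v)) J = \<eta>) (restrict (Z p) J)})
        = (\<lambda>k. measure (\<mu> (s k + i0)) {x\<in>space (\<mu> (s k + i0)). restrict x J = \<eta>})"
      unfolding fstZ using cpl_cyl_fst[OF cpl J eta, symmetric] by simp
    have l1: "(\<lambda>k. measure (\<nu>s (s k)) {p\<in>space (\<nu>s (s k)). (\<lambda>\<xi>. restrict (\<lambda>v. fst (\<xi> v)) J = \<eta>) (restrict (Z p) J)})
        \<longlonglongrightarrow> measure \<nu> {p\<in>space \<nu>. (\<lambda>\<xi>. restrict (\<lambda>v. fst (\<xi> v)) J = \<eta>) (restrict (Z p) J)}"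
      by (rule \<nu>_conv[OF J])
    have l2: "(\<lambda>k. measure (\<nu>s (s k)) {p\<in>space (\<nu>s (s k)). (\<lambda>\<xi>. restrict (\<lambda>v. fst (\<xi> v)) J = \<eta>) (restrict (Z p) J)})
        \<longlonglongrightarrow> measure mm {f\<in>space mm. restrict f J = \<eta>}"
      unfolding eqseq by (rule mu_sub[OF J])
    have "measure \<nu> {p\<in>space \<nu>. (\<lambda>\<xi>. restrict (\<lambda>v. fst (\<xi> v)) J = \<eta>) (restrict (Z p) J)} = measure mm {f\<in>space mm. restrict f J = \<eta>}"
      by (rule LIMSEQ_unique[OF l1 l2])
    with 1 show "measure (distr \<nu> (config_space UNIV) fst) {f\<in>space (distr \<nu> (config_space UNIV) fst). restrict f J = \<eta>}
        = measure mm {f\<in>space mm. restrict f J = \<eta>}" by simp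
  qed
  have marg_snd: "distr \<nu> (config_space UNIV) snd = mm"
  proof (rule uniq_cyl)
    show "prob_space (distr \<nu> (config_space UNIV) snd)"
      by (rule prob_space.prob_space_distr[OF \<nu>p]) (simp add: \<nu>sets measurable_cong_sets[OF \<nu>sets refl])
    show "prob_space mm" by (rule mm(1))
    show "sets (distr \<nu> (config_space UNIV) snd) = sets (PiM UNIV (\<lambda>_. count_space UNIV))"
      by (simp add: config_space_def)
    show "sets mm = sets (PiM UNIV (\<lambda>_. count_space UNIV))" by (rule mm(2))
    fix J and \<eta> :: "int^'d \<Rightarrow> 'a" assume J: "finite J" and eta: "\<eta> \<in> PiE J (\<lambda>_. UNIV)"
    have fm: "snd \<in> measurable \<nu> (config_space UNIV)"
      by (subst measurable_cong_sets[OF \<nu>sets refl]) (rule measurable_snd)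
    have cs: "{f\<in>space (config_space UNIV). restrict f J = \<eta>} \<in> sets (config_space UNIV)"
      by (rule cyl_sets[where X="\<lambda>x. x", OF J _ eta]) (simp add: config_space_def coord_meas)
    have "measure (distr \<nu> (config_space UNIV) snd) {f\<in>space (distr \<nu> (config_space UNIV) snd). restrict f J = \<eta>}
        = measure \<nu> (snd -` {f\<in>space (config_space UNIV). restrict f J = \<eta>} \<inter> space \<nu>)"
      by (simp add: measure_distr[OF fm cs])
    also have "\<dots> = measure \<nu> {p\<in>space \<nu>. (\<lambda>\<xi>. restrict (\<lambda>v. snd (\<xi> v)) J = \<eta>) (restrict (Z p) J)}"
      unfolding sndZ by (auto simp: \<nu>space config_space_def space_PiM intro!: arg_cong[where f="measure \<nu>"])
    finally have 1: "measure (distr \<nu> (config_space UNIV) snd) {f\<in>space (distr \<nu> (config_space UNIV) snd). restrict f J = \<eta>}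
        = measure \<nu> {p\<in>space \<nu>. (\<lambda>\<xi>. restrict (\<lambda>v. snd (\<xi> v)) J = \<eta>) (restrict (Z p) J)}" .
    have eqseq: "(\<lambda>k. measure (\<nu>s (s k)) {p\<in>space (\<nu>s (s k)). (\<lambda>\<xi>. restrict (\<lambda>v. snd (\<xi> v)) J = \<eta>) (restrict (Z p) J)})
        = (\<lambda>k. measure (\<mu> (s k + i0)) {x\<in>space (\<mu> (s k + i0)). restrict x J = \<eta>})"
      unfolding sndZ using cpl_cyl_snd[OF cpl J eta, symmetric] by simp
    have l1: "(\<lambda>k. measure (\<nu>s (s k)) {p\<in>space (\<nu>s (s k)). (\<lambda>\<xi>. restrict (\<lambda>v. snd (\<xi> v)) J = \<eta>) (restrict (Z p) J)})
        \<longlonglongrightarrow> measure \<nu> {p\<in>space \<nu>. (\<lambda>\<xi>. restrict (\<lambda>v. snd (\<xi> v)) J = \<eta>) (restrict (Z p) J)}"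
      by (rule \<nu>_conv[OF J])
    have l2: "(\<lambda>k. measure (\<nu>s (s k)) {p\<in>space (\<nu>s (s k)). (\<lambda>\<xi>. restrict (\<lambda>v. snd (\<xi> v)) J = \<eta>) (restrict (Z p) J)})
        \<longlonglongrightarrow> measure mm {f\<in>space mm. restrict f J = \<eta>}"
      unfolding eqseq by (rule mu_sub[OF J])
    have "measure \<nu> {p\<in>space \<nu>. (\<lambda>\<xi>. restrict (\<lambda>v. snd (\<xi> v)) J = \<eta>) (restrict (Z p) J)} = measure mm {f\<in>space mm. restrict f J = \<eta>}"
      by (rule LIMSEQ_unique[OF l1 l2])
    with 1 show "measure (distr \<nu> (config_space UNIV) snd) {f\<in>space (distr \<nu> (config_space UNIV) snd). restrict f J = \<eta>}
        = measure mm {f\<in>space mm. restrict f J = \<eta>}" by simp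
  qed
  have bounds: "\<forall>k\<le>n. \<forall>v\<in>box k. measure \<nu> {p \<in> space \<nu>. fst p v \<noteq> snd p v} \<le> \<rho> (n - k)"
  proof (intro allI impI ballI)
    fix k and v :: "int^'d" assume k: "k \<le> n" and v: "v \<in> box k"
    have e: "{p\<in>space N. fst p v \<noteq> snd p v} = {p\<in>space N. (\<lambda>\<xi>. fst (\<xi> v) \<noteq> snd (\<xi> v)) (restrict (Z p) {v})}"
      for N :: "((int^'d \<Rightarrow> 'a) \<times> (int^'d \<Rightarrow> 'a)) measure"
      by (auto simp: Z_def)
    have l: "(\<lambda>k'. measure (\<nu>s (s k')) {p\<in>space (\<nu>s (s k')). fst p v \<noteq> snd p v})
        \<longlonglongrightarrow> measure \<nu> {p\<in>space \<nu>. fst p v \<noteq> snd p v}"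
      unfolding e by (rule \<nu>_conv) simp
    have "measure (\<nu>s (s k')) {p\<in>space (\<nu>s (s k')). fst p v \<noteq> snd p v} \<le> \<rho> (n - k)" for k'
      using cp\<nu>[of "s k'"] k v by (auto simp: cp_def)
    then show "measure \<nu> {p\<in>space \<nu>. fst p v \<noteq> snd p v} \<le> \<rho> (n - k)"
      by (intro LIMSEQ_le_const2[OF l]) auto
  qed
  have indep: "prob_space.indep_var \<nu>
             (config_space (UNIV - box n)) (\<lambda>p. restrict (fst p) (UNIV - box n))
             (config_space UNIV) snd"
  proof -
    interpret P: prob_space \<nu> by (rule \<nu>p)
    define X where "X p = restrict (fst p) (UNIV - box n)" for p :: "(int^'d \<Rightarrow> 'a) \<times> (int^'d \<Rightarrow> 'a)"
    define Mc where "Mc = (\<lambda>_::int^'d. count_space (UNIV::'a set))"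
    have fm: "fst \<in> measurable \<nu> (config_space UNIV)"
      by (subst measurable_cong_sets[OF \<nu>sets refl]) (rule measurable_fst)
    have Ym: "snd \<in> measurable \<nu> (config_space UNIV)"
      by (subst measurable_cong_sets[OF \<nu>sets refl]) (rule measurable_snd)
    have Xm: "X \<in> measurable \<nu> (config_space (UNIV - box n))"
      unfolding X_def config_space_def
      using measurable_compose[OF fm[unfolded config_space_def] measurable_restrict_subset[of "UNIV - box n" UNIV]]
      by simp
    define GX where "GX = {X -` A \<inter> space \<nu> | A. A \<in> prod_algebra (UNIV - box n) Mc}"
    define GY where "GY = {snd -` A \<inter> space \<nu> | A. A \<in> prod_algebra UNIV Mc}"
    have sigX: "sigma_sets (space \<nu>) {X -` A \<inter> space \<nu> | A. A \<in> sets (config_space (UNIV - box n))} = sigma_sets (space \<nu>) GX"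
    proof -
      have "sets (config_space (UNIV - box n)) = sigma_sets (space (config_space (UNIV - box n))) (prod_algebra (UNIV - box n) Mc)"
        by (simp add: config_space_def Mc_def sets_PiM space_PiM)
      moreover have "X \<in> space \<nu> \<rightarrow> space (config_space (UNIV - box n))"
        using measurable_space[OF Xm] by auto
      ultimately have "{X -` A \<inter> space \<nu> | A. A \<in> sets (config_space (UNIV - box n))} = sigma_sets (space \<nu>) GX"
        unfolding GX_def by (simp add: sigma_sets_vimage_commute)
      moreover have "GX \<subseteq> Pow (space \<nu>)" unfolding GX_def by auto
      ultimately show ?thesis by (simp add: sigma_sets_sigma_sets_eq)
    qed
    have sigY: "sigma_sets (space \<nu>) {snd -` A \<inter> space \<nu> | A. A \<in> sets (config_space UNIV)} = sigma_sets (space \<nu>) GY"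
    proof -
      have "sets (config_space UNIV) = sigma_sets (space (config_space UNIV)) (prod_algebra UNIV Mc)"
        by (simp add: config_space_def Mc_def sets_PiM space_PiM)
      moreover have "snd \<in> space \<nu> \<rightarrow> space (config_space UNIV)"
        using measurable_space[OF Ym] by auto
      ultimately have "{snd -` A \<inter> space \<nu> | A. A \<in> sets (config_space UNIV)} = sigma_sets (space \<nu>) GY"
        unfolding GY_def by (simp add: sigma_sets_vimage_commute)
      moreover have "GY \<subseteq> Pow (space \<nu>)" unfolding GY_def by auto
      ultimately show ?thesis by (simp add: sigma_sets_sigma_sets_eq)
    qed
    have IX: "Int_stable GX" unfolding GX_def by (rule Int_stable_vimage[OF Int_stable_prod_algebra])
    have IY: "Int_stable GY" unfolding GY_def by (rule Int_stable_vimage[OF Int_stable_prod_algebra])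
    have evX: "GX \<subseteq> P.events"
    proof
      fix a assume "a \<in> GX"
      then obtain A where a: "a = X -` A \<inter> space \<nu>" and A: "A \<in> prod_algebra (UNIV - box n) Mc"
        unfolding GX_def by blast
      have "A \<in> sets (config_space (UNIV - box n))"
        using A by (simp add: config_space_def Mc_def sets_PiM)
      then show "a \<in> P.events" unfolding a by (rule measurable_sets[OF Xm])
    qed
    have evY: "GY \<subseteq> P.events"
    proof
      fix a assume "a \<in> GY"
      then obtain A where a: "a = snd -` A \<inter> space \<nu>" and A: "A \<in> prod_algebra UNIV Mc"
        unfolding GY_def by blast
      have "A \<in> sets (config_space UNIV)"
        using A by (simp add: config_space_def Mc_def sets_PiM)
      then show "a \<in> P.events" unfolding a by (rule measurable_sets[OF Ym])
    qed
    have prodXY: "P.prob (a \<inter> b) = P.prob a * P.prob b" if a: "a \<in> GX" and b: "b \<in> GY" for a b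
    proof -
      obtain A where a: "a = X -` A \<inter> space \<nu>" and A: "A \<in> prod_algebra (UNIV - box n) Mc"
        using a unfolding GX_def by blast
      obtain B where b: "b = snd -` B \<inter> space \<nu>" and B: "B \<in> prod_algebra UNIV Mc"
        using b unfolding GY_def by blast
      obtain J F where A': "A = prod_emb (UNIV - box n) Mc J (PiE J F)" and J: "finite J" "J \<subseteq> UNIV - box n"
        using A by (rule prod_algebraE) blast
      obtain J' G where B': "B = prod_emb UNIV Mc J' (PiE J' G)" and J': "finite J'"
        using B by (rule prod_algebraE) blast
      define K where "K = J \<union> J'"
      have K: "finite K" using J J' by (simp add: K_def)
      define \<Phi>a where "\<Phi>a \<xi> \<longleftrightarrow> (\<forall>v\<in>J. fst (\<xi> v) \<in> F v)" for \<xi> :: "int^'d \<Rightarrow> 'a\<times>'a"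
      define \<Phi>b where "\<Phi>b \<xi> \<longleftrightarrow> (\<forall>v\<in>J'. snd (\<xi> v) \<in> G v)" for \<xi> :: "int^'d \<Rightarrow> 'a\<times>'a"
      have FA: "X p \<in> A \<longleftrightarrow> (\<forall>v\<in>J. fst p v \<in> F v)" for p
        using J(2) unfolding A' Mc_def prod_emb_cnt X_def by auto
      have FB: "snd p \<in> B \<longleftrightarrow> (\<forall>v\<in>J'. snd p v \<in> G v)" for p
        unfolding B' Mc_def prod_emb_cnt by auto
      have PA: "\<Phi>a (restrict (Z p) K) \<longleftrightarrow> (\<forall>v\<in>J. fst p v \<in> F v)" for p
        unfolding \<Phi>a_def Z_def K_def by auto
      have PB: "\<Phi>b (restrict (Z p) K) \<longleftrightarrow> (\<forall>v\<in>J'. snd p v \<in> G v)" for p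
        unfolding \<Phi>b_def Z_def K_def by auto
      have a_eq: "a = {p\<in>space \<nu>. \<Phi>a (restrict (Z p) K)}"
        unfolding a using FA PA by blast
      have b_eq: "b = {p\<in>space \<nu>. \<Phi>b (restrict (Z p) K)}"
        unfolding b using FB PB by blast
      obtain i1 where i1: "\<And>i. i \<ge> i1 \<Longrightarrow> K \<subseteq> D i" using eventually_sub[OF K] by blast
      have eq_i: "measure (\<nu>s i) {p\<in>space (\<nu>s i). \<Phi>a (restrict (Z p) K) \<and> \<Phi>b (restrict (Z p) K)} =
          measure (\<nu>s i) {p\<in>space (\<nu>s i). \<Phi>a (restrict (Z p) K)} * measure (\<nu>s i) {p\<in>space (\<nu>s i). \<Phi>b (restrict (Z p) K)}"
        if i: "i + i0 \<ge> i1" for i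
      proof -
        define Di where "Di = D (i + i0)"
        have KD: "K \<subseteq> Di" using i1[OF i] by (simp add: Di_def)
        interpret Q: prob_space "\<nu>s i" by (rule cpl_prob[OF cpl])
        have ind: "Q.indep_var (config_space (Di - box n)) (\<lambda>p. restrict (fst p) (Di - box n)) (config_space Di) snd"
          using cp\<nu>[of i] by (simp add: cp_def Di_def)
        define Ai where "Ai = prod_emb (Di - box n) Mc J (PiE J F)"
        define Bi where "Bi = prod_emb Di Mc J' (PiE J' G)"
        have JD: "J \<subseteq> Di - box n" using J(2) KD by (auto simp: K_def)
        have J'D: "J' \<subseteq> Di" using KD by (auto simp: K_def)
        have Ais: "Ai \<in> sets (config_space (Di - box n))"
          unfolding Ai_def config_space_def Mc_def by (rule sets_PiM_I[OF J(1) JD]) simp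
        have Bis: "Bi \<in> sets (config_space Di)"
          unfolding Bi_def config_space_def Mc_def by (rule sets_PiM_I[OF J' J'D]) simp
        have sf: "fst p \<in> PiE Di (\<lambda>_. UNIV)" "snd p \<in> PiE Di (\<lambda>_. UNIV)" if "p \<in> space (\<nu>s i)" for p
          using measurable_space[OF cpl_fst[OF cpl] that] measurable_space[OF cpl_snd[OF cpl] that]
          by (auto simp: Di_def config_space_def space_PiM)
        have FAi: "restrict (fst p) (Di - box n) \<in> Ai \<longleftrightarrow> (\<forall>v\<in>J. fst p v \<in> F v)" for p
          using JD unfolding Ai_def Mc_def prod_emb_cnt by auto
        have FBi: "snd p \<in> Bi \<longleftrightarrow> (\<forall>v\<in>J'. snd p v \<in> G v)" if "p \<in> space (\<nu>s i)" for p
          using sf(2)[OF that] unfolding Bi_def Mc_def prod_emb_cnt by (auto simp: PiE_def)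
        have e1: "(\<lambda>x. (restrict (fst x) (Di - box n), snd x)) -` (Ai \<times> Bi) \<inter> space (\<nu>s i) =
            {p\<in>space (\<nu>s i). \<Phi>a (restrict (Z p) K) \<and> \<Phi>b (restrict (Z p) K)}"
          using FAi FBi PA PB by blast
        have e2: "(\<lambda>p. restrict (fst p) (Di - box n)) -` Ai \<inter> space (\<nu>s i) = {p\<in>space (\<nu>s i). \<Phi>a (restrict (Z p) K)}"
          using FAi PA by blast
        have e3: "snd -` Bi \<inter> space (\<nu>s i) = {p\<in>space (\<nu>s i). \<Phi>b (restrict (Z p) K)}"
          using FBi PB by blast
        show ?thesis using Q.indep_varD[OF ind Ais Bis] unfolding e1 e2 e3 .
      qed
      have lab: "(\<lambda>k. measure (\<nu>s (s k)) {p\<in>space (\<nu>s (s k)). \<Phi>a (restrict (Z p) K) \<and> \<Phi>b (restrict (Z p) K)})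
          \<longlonglongrightarrow> measure \<nu> {p\<in>space \<nu>. \<Phi>a (restrict (Z p) K) \<and> \<Phi>b (restrict (Z p) K)}"
        using \<nu>_conv[OF K, of "\<lambda>\<xi>. \<Phi>a \<xi> \<and> \<Phi>b \<xi>"] by simp
      have la: "(\<lambda>k. measure (\<nu>s (s k)) {p\<in>space (\<nu>s (s k)). \<Phi>a (restrict (Z p) K)})
          \<longlonglongrightarrow> measure \<nu> {p\<in>space \<nu>. \<Phi>a (restrict (Z p) K)}"
        by (rule \<nu>_conv[OF K])
      have lb: "(\<lambda>k. measure (\<nu>s (s k)) {p\<in>space (\<nu>s (s k)). \<Phi>b (restrict (Z p) K)})
          \<longlonglongrightarrow> measure \<nu> {p\<in>space \<nu>. \<Phi>b (restrict (Z p) K)}"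
        by (rule \<nu>_conv[OF K])
      have ev: "eventually (\<lambda>k. measure (\<nu>s (s k)) {p\<in>space (\<nu>s (s k)). \<Phi>a (restrict (Z p) K)} *
            measure (\<nu>s (s k)) {p\<in>space (\<nu>s (s k)). \<Phi>b (restrict (Z p) K)} =
          measure (\<nu>s (s k)) {p\<in>space (\<nu>s (s k)). \<Phi>a (restrict (Z p) K) \<and> \<Phi>b (restrict (Z p) K)}) sequentially"
      proof (rule eventually_sequentiallyI[of i1])
        fix k assume "i1 \<le> k"
        then have "s k + i0 \<ge> i1" using seq_suble[OF s(1), of k] by simp
        then show "measure (\<nu>s (s k)) {p\<in>space (\<nu>s (s k)). \<Phi>a (restrict (Z p) K)} *
            measure (\<nu>s (s k)) {p\<in>space (\<nu>s (s k)). \<Phi>b (restrict (Z p) K)} =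
          measure (\<nu>s (s k)) {p\<in>space (\<nu>s (s k)). \<Phi>a (restrict (Z p) K) \<and> \<Phi>b (restrict (Z p) K)}"
          using eq_i[of "s k"] by simp
      qed
      have "(\<lambda>k. measure (\<nu>s (s k)) {p\<in>space (\<nu>s (s k)). \<Phi>a (restrict (Z p) K) \<and> \<Phi>b (restrict (Z p) K)})
          \<longlonglongrightarrow> measure \<nu> {p\<in>space \<nu>. \<Phi>a (restrict (Z p) K)} * measure \<nu> {p\<in>space \<nu>. \<Phi>b (restrict (Z p) K)}"
        using tendsto_cong[OF ev] tendsto_mult[OF la lb] by blast
      from LIMSEQ_unique[OF lab this]
      have "measure \<nu> {p\<in>space \<nu>. \<Phi>a (restrict (Z p) K) \<and> \<Phi>b (restrict (Z p) K)} =
          measure \<nu> {p\<in>space \<nu>. \<Phi>a (restrict (Z p) K)} * measure \<nu> {p\<in>space \<nu>. \<Phi>b (restrict (Z p) K)}" .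
      moreover have "a \<inter> b = {p\<in>space \<nu>. \<Phi>a (restrict (Z p) K) \<and> \<Phi>b (restrict (Z p) K)}"
        unfolding a_eq b_eq by auto
      ultimately show ?thesis unfolding a_eq b_eq by simp
    qed
    have "P.indep_set GX GY"
      unfolding P.indep_sets2_eq using evX evY prodXY by blast
    then have "P.indep_set (sigma_sets (space \<nu>) GX) (sigma_sets (space \<nu>) GY)"
      by (rule P.indep_set_sigma_sets[OF _ IX IY])
    then show ?thesis
    proof -
      have Xeq: "(\<lambda>p. restrict (fst p) (UNIV - box n)) = X" by (simp add: X_def fun_eq_iff)
      show ?thesis unfolding P.indep_var_eq Xeq sigX sigY using Xm Ym \<open>P.indep_set (sigma_sets (space \<nu>) GX) (sigma_sets (space \<nu>) GY)\<close> by simp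
    qed
  qed
  have "is_coupling \<nu> mm UNIV mm UNIV"
    unfolding is_coupling_def using \<nu>p \<nu>sets marg_fst marg_snd by simp
  with indep bounds show ?thesis by blast
qed

end


theorem proposition2p2:
  fixes \<mu> :: "nat \<Rightarrow> ((int ^ 'd::finite) \<Rightarrow> 'a::finite) measure"
    and D :: "nat \<Rightarrow> (int ^ 'd) set"
    and \<rho> :: "nat \<Rightarrow> real"
  assumes prob: "\<And>i. prob_space (\<mu> i)"
    and sets_mu: "\<And>i. sets (\<mu> i) = sets (config_space (D i))"
    and mix: "locally_mixing_with (range (\<lambda>i. (\<mu> i, D i))) \<rho>"
    and incD: "incseq D"
    and exhaust: "(\<Union>i. D i) = UNIV"
  shows "\<exists>\<mu>lim :: ((int ^ 'd) \<Rightarrow> 'a) measure.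
           prob_space \<mu>lim \<and> sets \<mu>lim = sets (config_space UNIV) \<and>
           (\<forall>F. finite F \<longrightarrow> (\<forall>\<eta> \<in> PiE F (\<lambda>_. UNIV).
              (\<lambda>i. measure (\<mu> i) {f \<in> space (\<mu> i). restrict f F = \<eta>})
                \<longlonglongrightarrow> measure \<mu>lim {f \<in> space \<mu>lim. restrict f F = \<eta>})) \<and>
           locally_mixing_with {(\<mu>lim, UNIV)} \<rho>"
proof -
  interpret LM \<mu> D \<rho> using prob sets_mu mix incD exhaust by (rule LM.intro)
  obtain mm where mm: "prob_space mm" "sets mm = sets (PiM UNIV (\<lambda>_. count_space (UNIV::'a set)))"
    and mmlim: "\<And>J \<Phi>. finite J \<Longrightarrow> (\<lambda>i. measure (\<mu> i) {x\<in>space (\<mu> i). \<Phi> (restrict x J)})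
        \<longlonglongrightarrow> measure mm {f\<in>space mm. \<Phi> (restrict f J)}"
    using mulim_ex by blast
  have "sets mm = sets (config_space UNIV)" using mm(2) by (simp add: config_space_def)
  moreover have "\<forall>F. finite F \<longrightarrow> (\<forall>\<eta> \<in> PiE F (\<lambda>_. UNIV).
              (\<lambda>i. measure (\<mu> i) {f \<in> space (\<mu> i). restrict f F = \<eta>})
                \<longlonglongrightarrow> measure mm {f \<in> space mm. restrict f F = \<eta>})"
  proof (intro allI impI ballI)
    fix F :: "(int^'d) set" and \<eta> assume F: "finite F"
    show "(\<lambda>i. measure (\<mu> i) {f \<in> space (\<mu> i). restrict f F = \<eta>})
                \<longlonglongrightarrow> measure mm {f \<in> space mm. restrict f F = \<eta>}"
      by (rule mmlim[OF F])
  qed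
  moreover have "locally_mixing_with {(mm, UNIV)} \<rho>"
  proof -
    note lc = limit_coupling[OF mm mmlim]
    show ?thesis unfolding locally_mixing_with_def
      by (simp only: rate Ball_def mem_Collect_eq singleton_iff case_prod_conv prod.inject simp_thms)
         (use lc in blast)
  qed
  ultimately show ?thesis using mm(1) by blast
qed

end
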